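(* Let $p$ and $q$ be distinct primes and $n=pq$. Let $c_0,\ldots,c_{n-1}$ be integers such that $$\sum_{k=0}^{n-1}c_k\zeta_n^{-k}=\frac{1}{1-\zeta_n^{-1}}.$$ Let $a_0=0$ and, for $j=1,\ldots,n-1$, let $a_j=\frac{1}{\zeta_n^{-j}-1}+\sum_{k=0}^{n-1}c_k\zeta_n^{-jk}$. Then $G=\mathrm{Circ}(a_0,\ldots,a_{n-1})$ is a non-dense circulant (i.e. $a_j=0$ for some $j\in\{1,\ldots,n-1\}$) with universal perfect state transfer.
   Context: $\zeta_n=e^{2\pi\mathtt{i}/n}$. $\mathrm{Circ}(a_0,\ldots,a_{n-1})$ denotes the $n\times n$ matrix $C$ with $C_{j,k}=a_{k-j}$ (indices mod $n$), viewed as the adjacency matrix of a weighted graph. A graph with adjacency matrix $A$ has universal perfect state transfer if for every pair of vertices $v,w$ there is $t>0$ with $|\langle w|e^{-\mathtt{i} At}|v\rangle|=1$. A circulant is dense if $a_j\ne0$ for all $j=1,\ldots,n-1$. *)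

theory Defs
  imports Complex_Main "Jordan_Normal_Form.Matrix"
begin

definition zeta :: "nat \<Rightarrow> complex" where
  "zeta n = exp (2 * of_real pi * \<i> / of_nat n)"

definition circ_mat :: "nat \<Rightarrow> (nat \<Rightarrow> complex) \<Rightarrow> complex mat" where
  "circ_mat n a = mat n n (\<lambda>(j, k). a ((n + k - j) mod n))"

definition mat_exp :: "complex mat \<Rightarrow> complex mat" where
  "mat_exp A = mat (dim_row A) (dim_col A)
     (\<lambda>(i, j). \<Sum>m. (A ^\<^sub>m m) $$ (i, j) / of_nat (fact m))"

definition universal_pst :: "complex mat \<Rightarrow> bool" where
  "universal_pst A \<longleftrightarrow>
     (\<forall>v < dim_row A. \<forall>w < dim_row A. \<exists>t::real. t > 0 \<and>
        cmod (mat_exp ((- \<i> * of_real t) \<cdot>\<^sub>m A) $$ (w, v)) = 1)"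

definition dense_circ :: "nat \<Rightarrow> (nat \<Rightarrow> complex) \<Rightarrow> bool" where
  "dense_circ n a \<longleftrightarrow> (\<forall>j \<in> {1..<n}. a j \<noteq> 0)"

end

theory Submission imports Defs "HOL-Analysis.Complex_Transcendental" begin


definition ee :: "nat \<Rightarrow> int \<Rightarrow> complex" where
  "ee n k = exp (of_int k * (2 * of_real pi * \<i> / of_nat n))"

lemma zeta_powi: "zeta n powi k = ee n k"
  unfolding zeta_def ee_def by (simp add: exp_power_int)

lemma ee_add: "ee n (a + b) = ee n a * ee n b"
  unfolding ee_def by (simp only: of_int_add distrib_right exp_add)

lemma ee_0[simp]: "ee n 0 = 1" unfolding ee_def by simp

lemma ee_nz[simp]: "ee n k \<noteq> 0" unfolding ee_def by simp

lemma ee_neg: "ee n (- k) = inverse (ee n k)"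
  unfolding ee_def by (simp add: exp_minus)

lemma ee_1_iff:
  assumes "n > 0" shows "ee n k = 1 \<longleftrightarrow> int n dvd k"
proof -
  have "ee n k = 1 \<longleftrightarrow> (\<exists>m::int. 2 * pi * of_int k / of_nat n = of_int (2*m) * pi)"
    unfolding ee_def exp_eq_1 by (simp add: field_simps)
  also have "\<dots> \<longleftrightarrow> (\<exists>m::int. of_int k = (of_int (m * int n) :: real))"
    using assms by (auto simp: field_simps)
  also have "\<dots> \<longleftrightarrow> int n dvd k"
    by (metis dvd_def mult.commute of_int_eq_iff)
  finally show ?thesis .
qed

lemma ee_n[simp]: assumes "n > 0" shows "ee n (int n * m) = 1"
  using ee_1_iff[OF assms] by simp

lemma ee_period: assumes "n > 0" "int n dvd (a - b)" shows "ee n a = ee n b"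
proof -
  obtain m where "a = b + int n * m" using assms(2) by (metis add_diff_cancel_left' diff_add_cancel dvd_def)
  thus ?thesis using ee_add[of n b "int n * m"] assms(1) by simp
qed

lemma ee_mult_pow: "ee n (d * int l) = ee n d ^ l"
proof -
  have "ee n (d * int l) = exp (of_nat l * (of_int d * (2 * of_real pi * \<i> / of_nat n)))"
    unfolding ee_def by (simp add: algebra_simps)
  thus ?thesis unfolding ee_def exp_of_nat_mult by simp
qed

lemma orth:
  assumes "n > 0"
  shows "(\<Sum>l<n. ee n (d * int l)) = (if int n dvd d then of_nat n else 0)"
proof (cases "int n dvd d")
  case True
  then have "\<And>l. ee n (d * int l) = 1" using assms ee_1_iff by auto
  then show ?thesis using True by simp
next
  case False
  then have ne: "ee n d \<noteq> 1" using ee_1_iff[OF assms] by simp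
  have "ee n d ^ n = 1" using ee_mult_pow[of n d n] ee_1_iff[OF assms, of "d * int n"] by simp
  then show ?thesis using False geometric_sum[OF ne, of n] by (simp add: ee_mult_pow)
qed


lemma small_dvd:
  fixes x n :: int assumes "-n < x" "x < n" shows "n dvd x \<longleftrightarrow> x = 0"
proof
  assume "n dvd x"
  then obtain m where m: "x = n * m" by (auto simp: dvd_def)
  have "n > 0" using assms by simp
  show "x = 0"
  proof (cases "m = 0")
    case False
    then have "m \<ge> 1 \<or> m \<le> -1" by auto
    then show ?thesis
    proof
      assume "m \<ge> 1" then have "n * m \<ge> n * 1" using \<open>n > 0\<close> by (intro mult_left_mono) auto
      then show ?thesis using m assms by linarith
    next
      assume "m \<le> -1" then have "n * m \<le> n * (-1)" using \<open>n > 0\<close> by (intro mult_left_mono) auto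
      then show ?thesis using m assms by linarith
    qed
  qed (use m in simp)
qed simp

lemma inner_orth:
  assumes "n > 0" "l < n" "l' < n"
  shows "(\<Sum>j<n. ee n ((int i - int j) * int l) * ee n ((int j - int k) * int l'))
        = (if l = l' then of_nat n * ee n ((int i - int k) * int l) else 0)"
proof -
  have "\<And>j. ee n ((int i - int j) * int l) * ee n ((int j - int k) * int l')
       = ee n (int i * int l - int k * int l') * ee n ((int l' - int l) * int j)"
    by (simp only: ee_add[symmetric]) (simp add: algebra_simps)
  then have "(\<Sum>j<n. ee n ((int i - int j) * int l) * ee n ((int j - int k) * int l'))
     = ee n (int i * int l - int k * int l') * (\<Sum>j<n. ee n ((int l' - int l) * int j))"
    by (simp add: sum_distrib_left)
  also have "\<dots> = ee n (int i * int l - int k * int l') * (if l = l' then of_nat n else 0)"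
    using orth[OF assms(1), of "int l' - int l"] small_dvd[of "int n" "int l' - int l"] assms by auto
  finally show ?thesis by (simp add: algebra_simps)
qed

lemma conv:
  assumes "n > 0"
  shows "(\<Sum>j<n. ((\<Sum>l<n. \<alpha> l * ee n ((int i - int j) * int l)) / of_nat n)
               * ((\<Sum>l<n. \<beta> l * ee n ((int j - int k) * int l)) / of_nat n))
       = (\<Sum>l<n. \<alpha> l * \<beta> l * ee n ((int i - int k) * int l)) / of_nat n"
proof -
  have "(\<Sum>j<n. ((\<Sum>l<n. \<alpha> l * ee n ((int i - int j) * int l)) / of_nat n)
               * ((\<Sum>l<n. \<beta> l * ee n ((int j - int k) * int l)) / of_nat n))
     = (\<Sum>j<n. \<Sum>l<n. \<Sum>l'<n. \<alpha> l * \<beta> l' * (ee n ((int i - int j) * int l) * ee n ((int j - int k) * int l'))) / (of_nat n * of_nat n)"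
    by (simp add: sum_divide_distrib sum_product mult_ac)
  also have "(\<Sum>j<n. \<Sum>l<n. \<Sum>l'<n. \<alpha> l * \<beta> l' * (ee n ((int i - int j) * int l) * ee n ((int j - int k) * int l')))
     = (\<Sum>l<n. \<Sum>j<n. \<Sum>l'<n. \<alpha> l * \<beta> l' * (ee n ((int i - int j) * int l) * ee n ((int j - int k) * int l')))"
    by (rule sum.swap)
  also have "\<dots> = (\<Sum>l<n. \<Sum>l'<n. \<Sum>j<n. \<alpha> l * \<beta> l' * (ee n ((int i - int j) * int l) * ee n ((int j - int k) * int l')))"
    by (rule sum.cong[OF refl], rule sum.swap)
  also have "\<dots> = (\<Sum>l<n. \<Sum>l'<n. \<alpha> l * \<beta> l' * (\<Sum>j<n. ee n ((int i - int j) * int l) * ee n ((int j - int k) * int l')))"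
    by (simp add: sum_distrib_left)
  also have "\<dots> = (\<Sum>l<n. \<Sum>l'<n. if l' = l then \<alpha> l * \<beta> l * (of_nat n * ee n ((int i - int k) * int l)) else 0)"
    by (intro sum.cong refl) (auto simp: inner_orth[OF assms])
  also have "\<dots> = (\<Sum>l<n. \<alpha> l * \<beta> l * (of_nat n * ee n ((int i - int k) * int l)))"
    by simp
  finally show ?thesis using assms by (simp add: sum_distrib_left sum_divide_distrib mult_ac)
qed

lemma pow_formula:
  assumes "n > 0" "B \<in> carrier_mat n n"
    and B: "\<And>i k. i < n \<Longrightarrow> k < n \<Longrightarrow> B $$ (i,k) = (\<Sum>l<n. \<beta> l * ee n ((int i - int k) * int l)) / of_nat n"
  shows "i < n \<Longrightarrow> k < n \<Longrightarrow> (B ^\<^sub>m m) $$ (i,k) = (\<Sum>l<n. \<beta> l ^ m * ee n ((int i - int k) * int l)) / of_nat n"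
proof (induction m arbitrary: i k)
  case 0
  have "(\<Sum>l<n. ee n ((int i - int k) * int l)) = (if i = k then of_nat n else 0)"
    using orth[OF assms(1), of "int i - int k"] small_dvd[of "int n" "int i - int k"] 0 by auto
  then show ?case using 0 assms by simp
next
  case (Suc m)
  have "(B ^\<^sub>m Suc m) $$ (i,k) = (\<Sum>j<n. (B ^\<^sub>m m) $$ (i,j) * B $$ (j,k))"
    using Suc.prems assms(2) by (simp add: scalar_prod_def atLeast0LessThan)
  also have "\<dots> = (\<Sum>j<n. ((\<Sum>l<n. \<beta> l ^ m * ee n ((int i - int j) * int l)) / of_nat n)
               * ((\<Sum>l<n. \<beta> l * ee n ((int j - int k) * int l)) / of_nat n))"
    using Suc by (intro sum.cong refl) (simp add: B)
  also have "\<dots> = (\<Sum>l<n. \<beta> l ^ Suc m * ee n ((int i - int k) * int l)) / of_nat n"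
    by (subst conv[OF assms(1)]) (simp add: mult_ac)
  finally show ?case .
qed



lemma dvd_idx:
  assumes "i < n" "k < n" "r < n"
  shows "int n dvd (int r + int i - int k) \<longleftrightarrow> r = (n + k - i) mod n"
proof (cases "i \<le> k")
  case True
  have e: "n + k - i = (k - i) + n" using True by simp
  have r0: "(n + k - i) mod n = k - i" unfolding e mod_add_self2 using assms by (simp add: less_imp_diff_less)
  have "int n dvd (int r + int i - int k) \<longleftrightarrow> int r + int i - int k = 0"
    using assms True by (intro small_dvd) auto
  then show ?thesis using r0 True by auto
next
  case False
  then have r0: "(n + k - i) mod n = n + k - i" using assms by simp
  have "int n dvd (int r + int i - int k) \<longleftrightarrow> int n dvd (int r + int i - int k - int n)"
    using dvd_add_left_iff[of "int n" "int n" "int r + int i - int k - int n"] by simp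
  also have "\<dots> \<longleftrightarrow> int r + int i - int k - int n = 0"
    using assms False by (intro small_dvd) auto
  finally show ?thesis using r0 False assms by auto
qed

lemma circ_entry:
  assumes "n > 0" "i < n" "k < n"
  shows "circ_mat n a $$ (i,k) = (\<Sum>l<n. (\<Sum>r<n. a r * ee n (int r * int l)) * ee n ((int i - int k) * int l)) / of_nat n"
proof -
  have "(\<Sum>l<n. (\<Sum>r<n. a r * ee n (int r * int l)) * ee n ((int i - int k) * int l))
      = (\<Sum>l<n. \<Sum>r<n. a r * ee n (int r * int l) * ee n ((int i - int k) * int l))"
    by (simp add: sum_distrib_right)
  also have "\<dots> = (\<Sum>r<n. \<Sum>l<n. a r * ee n (int r * int l) * ee n ((int i - int k) * int l))"
    by (rule sum.swap)
  also have "\<dots> = (\<Sum>r<n. \<Sum>l<n. a r * ee n ((int r + int i - int k) * int l))"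
  proof -
    have "ee n (int r * int l) * ee n ((int i - int k) * int l) = ee n ((int r + int i - int k) * int l)" for r l
      by (simp add: ee_add[symmetric] algebra_simps)
    then show ?thesis by (simp add: mult.assoc)
  qed
  also have "\<dots> = (\<Sum>r<n. a r * (\<Sum>l<n. ee n ((int r + int i - int k) * int l)))"
    by (simp add: sum_distrib_left)
  also have "\<dots> = (\<Sum>r<n. if r = (n + k - i) mod n then of_nat n * a r else 0)"
    by (intro sum.cong refl) (simp add: orth[OF assms(1)] dvd_idx[OF assms(2,3)])
  also have "\<dots> = of_nat n * a ((n + k - i) mod n)"
    using assms by simp
  finally show ?thesis using assms unfolding circ_mat_def by simp
qed


lemma split0: fixes n :: nat assumes "n > 0" shows "(\<Sum>r<n. f r) = f 0 + (\<Sum>r\<in>{1..<n}. f r)"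
  using sum.atLeast_Suc_lessThan[where m=0 and n=n and g=f] assms by (simp add: atLeast0LessThan)

lemma ee_ne1: assumes "r \<in> {1..<n}" shows "ee n (int r) \<noteq> 1"
  using assms ee_1_iff[of n "int r"] small_dvd[of "int n" "int r"] by auto

lemma g_lemma:
  assumes "n > 1" "l < n"
  shows "(\<Sum>r\<in>{1..<n}. ee n (int r * int l) / (ee n (- int r) - 1))
       = (\<Sum>r\<in>{1..<n}. 1 / (ee n (- int r) - 1)) + of_nat l"
  using assms(2)
proof (induction l)
  case 0 then show ?case by simp
next
  case (Suc l)
  have step: "ee n (int r * int (Suc l)) / (ee n (- int r) - 1)
      = ee n (int r * int l) / (ee n (- int r) - 1) - ee n (int (Suc l) * int r)" if r: "r \<in> {1..<n}" for r
  proof -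
    define x where "x = ee n (int r)"
    define y where "y = ee n (int r * int l)"
    have x1: "x \<noteq> 1" using ee_ne1[OF r] x_def by simp
    have x0: "x \<noteq> 0" using x_def by simp
    have e1: "ee n (int r * int (Suc l)) = y * x" unfolding x_def y_def
      by (simp add: ee_add[symmetric] algebra_simps)
    have e2: "ee n (int (Suc l) * int r) = y * x" using e1 by (simp add: mult.commute)
    have e3: "ee n (- int r) = inverse x" unfolding x_def by (simp add: ee_neg)
    have "inverse x \<noteq> 1" using x1 x0 by (simp add: inverse_eq_1_iff)
    then have "inverse x - 1 \<noteq> 0" by simp
    then show ?thesis unfolding e1 e2 e3 y_def[symmetric] using x0 x1
      by (simp add: field_simps)
  qed
  have s1: "(\<Sum>r\<in>{1..<n}. ee n (int (Suc l) * int r)) = -1"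
  proof -
    have "(\<Sum>r<n. ee n (int (Suc l) * int r)) = 0"
      using orth[of n "int (Suc l)"] assms Suc.prems small_dvd[of "int n" "int (Suc l)"] by auto
    then show ?thesis using split0[of n "\<lambda>r. ee n (int (Suc l) * int r)"] assms
      by (simp add: add_eq_0_iff)
  qed
  have "(\<Sum>r\<in>{1..<n}. ee n (int r * int (Suc l)) / (ee n (- int r) - 1))
      = (\<Sum>r\<in>{1..<n}. ee n (int r * int l) / (ee n (- int r) - 1)) - (\<Sum>r\<in>{1..<n}. ee n (int (Suc l) * int r))"
    unfolding sum_subtractf[symmetric] by (rule sum.cong[OF refl], erule step)
  then show ?case using Suc s1 by simp
qed


lemma second_part:
  assumes "n > 0" "l < n"
  shows "(\<Sum>r\<in>{1..<n}. (\<Sum>k<n. of_int (c k) * ee n (- (int r * int k))) * ee n (int r * int l))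
       = of_nat n * of_int (c l) - (\<Sum>k<n. of_int (c k))"
proof -
  have "(\<Sum>r<n. (\<Sum>k<n. of_int (c k) * ee n (- (int r * int k))) * ee n (int r * int l))
      = (\<Sum>r<n. \<Sum>k<n. of_int (c k) * ee n (- (int r * int k)) * ee n (int r * int l))"
    by (simp add: sum_distrib_right)
  also have "\<dots> = (\<Sum>k<n. \<Sum>r<n. of_int (c k) * ee n (- (int r * int k)) * ee n (int r * int l))"
    by (rule sum.swap)
  also have "\<dots> = (\<Sum>k<n. \<Sum>r<n. of_int (c k) * ee n ((int l - int k) * int r))"
  proof -
    have "ee n (- (int r * int k)) * ee n (int r * int l) = ee n ((int l - int k) * int r)" for r k
      by (simp add: ee_add[symmetric] algebra_simps)
    then show ?thesis by (simp add: mult.assoc)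
  qed
  also have "\<dots> = (\<Sum>k<n. of_int (c k) * (\<Sum>r<n. ee n ((int l - int k) * int r)))"
    by (simp add: sum_distrib_left)
  also have "\<dots> = (\<Sum>k<n. if k = l then of_nat n * of_int (c k) else 0)"
    using assms by (intro sum.cong refl) (auto simp: orth small_dvd)
  also have "\<dots> = of_nat n * of_int (c l)" using assms by simp
  finally have h: "(\<Sum>r<n. (\<Sum>k<n. of_int (c k) * ee n (- (int r * int k))) * ee n (int r * int l)) = of_nat n * of_int (c l)" .
  have "(\<Sum>r<n. (\<Sum>k<n. of_int (c k) * ee n (- (int r * int k))) * ee n (int r * int l))
     = (\<Sum>k<n. of_int (c k)) + (\<Sum>r\<in>{1..<n}. (\<Sum>k<n. of_int (c k) * ee n (- (int r * int k))) * ee n (int r * int l))"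
    using split0[OF assms(1), of "\<lambda>r. (\<Sum>k<n. of_int (c k) * ee n (- (int r * int k))) * ee n (int r * int l)"]
    by simp
  then show ?thesis using h by (simp add: eq_diff_eq)
qed


lemma G_real:
  assumes "n > 0"
  shows "cnj (\<Sum>r\<in>{1..<n}. 1 / (ee n (- int r) - 1)) = (\<Sum>r\<in>{1..<n}. 1 / (ee n (- int r) - 1))"
proof -
  have c: "cnj (ee n k) = ee n (- k)" for k unfolding ee_def by (simp add: exp_cnj)
  have "cnj (\<Sum>r\<in>{1..<n}. 1 / (ee n (- int r) - 1)) = (\<Sum>r\<in>{1..<n}. 1 / (ee n (int r) - 1))"
    by (simp add: c)
  also have "\<dots> = (\<Sum>r\<in>{1..<n}. 1 / (ee n (- int r) - 1))"
  proof (rule sum.reindex_bij_witness[where i="\<lambda>r. n - r" and j="\<lambda>r. n - r"])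
    fix r assume r: "r \<in> {1..<n}"
    have "ee n (- int (n - r)) = ee n (int r)"
      using r assms by (intro ee_period) auto
    then show "1 / (ee n (- int (n - r)) - 1) = 1 / (ee n (int r) - 1)" by simp
  qed (auto simp: algebra_simps)
  finally show ?thesis .
qed


lemma exp_sums_c: "(\<lambda>m. z ^ m / of_nat (fact m)) sums exp (z::complex)"
proof -
  have "(\<lambda>m. z ^ m /\<^sub>R fact m) = (\<lambda>m. z ^ m / of_nat (fact m))"
    by (rule ext) (simp add: scaleR_conv_of_real field_simps)
  then show ?thesis using exp_converges[of z] by simp
qed

theorem proposition1:
  fixes p q n :: nat and c :: "nat \<Rightarrow> int" and a :: "nat \<Rightarrow> complex"
  assumes "prime p" and "prime q" and "p \<noteq> q" and "n = p * q"
    and "(\<Sum>k<n. of_int (c k) * zeta n powi (- int k)) = 1 / (1 - zeta n powi (-1))"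
    and "a = (\<lambda>j. if j = 0 then 0
                else 1 / (zeta n powi (- int j) - 1)
                     + (\<Sum>k<n. of_int (c k) * zeta n powi (- int (j * k))))"
  shows "\<not> dense_circ n a \<and> universal_pst (circ_mat n a)"
proof -
  have "p \<ge> 2" "q \<ge> 2" using assms(1,2) by (simp_all add: prime_ge_2_nat)
  then have "n \<ge> 4" using assms(4) mult_le_mono[of 2 p 2 q] by simp
  then have n1: "n > 1" and n0: "n > 0" by auto
  have hs: "(\<Sum>k<n. of_int (c k) * ee n (- int k)) = 1 / (1 - ee n (-1))"
    using assms(5) by (simp only: zeta_powi)
  have ha: "a = (\<lambda>j. if j = 0 then 0 else 1 / (ee n (- int j) - 1)
                     + (\<Sum>k<n. of_int (c k) * ee n (- (int j * int k))))"
    using assms(6) by (simp only: zeta_powi of_nat_mult)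
  have "a 1 = 1 / (ee n (-1) - 1) + 1 / (1 - ee n (-1))"
    using hs by (simp add: ha)
  also have "\<dots> = 1 / (ee n (-1) - 1) + 1 / (- (ee n (-1) - 1))"
    by (simp only: minus_diff_eq)
  also have "\<dots> = 0"
    by (simp only: divide_minus_right add.right_inverse)
  finally have a1: "a 1 = 0" .
  have nd: "\<not> dense_circ n a" unfolding dense_circ_def using a1 n1 by auto
  define lam where "lam l = (\<Sum>r<n. a r * ee n (int r * int l))" for l
  define G where "G = (\<Sum>r\<in>{1..<n}. 1 / (ee n (- int r) - 1))"
  define C where "C = (\<Sum>k<n. (of_int (c k) :: complex))"
  define \<kappa> where "\<kappa> = Re (G - C)"
  have "cnj G = G" using G_real[OF n0] unfolding G_def .
  then have "Im (cnj G) = Im G" by simp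
  then have "Im G = 0" by simp
  moreover have "Im C = 0" unfolding C_def by (simp add: Im_sum)
  ultimately have GC: "G - C = of_real \<kappa>" unfolding \<kappa>_def by (simp add: complex_eq_iff)
  have lam_eq: "lam l = of_nat n * of_int (c l) + of_nat l + of_real \<kappa>" if l: "l < n" for l
  proof -
    have "lam l = (\<Sum>r\<in>{1..<n}. a r * ee n (int r * int l))"
      unfolding lam_def using split0[OF n0, of "\<lambda>r. a r * ee n (int r * int l)"] by (simp add: ha)
    also have "\<dots> = (\<Sum>r\<in>{1..<n}. ee n (int r * int l) / (ee n (- int r) - 1)
          + (\<Sum>k<n. of_int (c k) * ee n (- (int r * int k))) * ee n (int r * int l))"
      by (intro sum.cong refl) (auto simp: ha algebra_simps)
    also have "\<dots> = G + of_nat l + (of_nat n * of_int (c l) - C)"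
      unfolding sum.distrib g_lemma[OF n1 l] second_part[OF n0 l] G_def C_def ..
    also have "\<dots> = of_nat n * of_int (c l) + of_nat l + (G - C)" by (simp add: algebra_simps)
    finally show ?thesis using GC by simp
  qed
  have dims: "dim_row (circ_mat n a) = n" "dim_col (circ_mat n a) = n"
    by (simp_all add: circ_mat_def)
  have pst: "universal_pst (circ_mat n a)"
    unfolding universal_pst_def
  proof (intro allI impI)
    fix v w assume v: "v < dim_row (circ_mat n a)" and w: "w < dim_row (circ_mat n a)"
    then have vn: "v < n" and wn: "w < n" by (simp_all add: dims)
    define s where "s = n + w - v"
    have s0: "s > 0" using vn unfolding s_def by simp
    have si: "int s = int n + int w - int v" using vn unfolding s_def by simp
    define t where "t = 2 * pi * real s / real n"
    have t0: "t > 0" using s0 n0 unfolding t_def by simp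
    define \<mu> where "\<mu> = - \<i> * complex_of_real t"
    define B where "B = \<mu> \<cdot>\<^sub>m circ_mat n a"
    have Bc: "B \<in> carrier_mat n n" unfolding B_def carrier_mat_def using dims by simp
    have Bent: "B $$ (i,k) = (\<Sum>l<n. (\<mu> * lam l) * ee n ((int i - int k) * int l)) / of_nat n"
      if "i < n" "k < n" for i k
    proof -
      have "B $$ (i,k) = \<mu> * circ_mat n a $$ (i,k)" unfolding B_def using that dims by simp
      also have "\<dots> = (\<Sum>l<n. (\<mu> * lam l) * ee n ((int i - int k) * int l)) / of_nat n"
        unfolding circ_entry[OF n0 that] lam_def[symmetric] by (simp add: sum_distrib_left mult.assoc)
      finally show ?thesis .
    qed
    have powB: "(B ^\<^sub>m m) $$ (w,v) = (\<Sum>l<n. (\<mu> * lam l)^m * ee n ((int w - int v) * int l)) / of_nat n" for m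
      using pow_formula[OF n0 Bc Bent wn vn] .
    have me: "mat_exp B $$ (w,v) = (\<Sum>m. (B ^\<^sub>m m) $$ (w,v) / of_nat (fact m))"
      unfolding mat_exp_def using wn vn Bc by simp
    have sm: "(\<lambda>m. (B ^\<^sub>m m) $$ (w,v) / of_nat (fact m)) sums (\<Sum>l<n. exp (\<mu> * lam l) * (ee n ((int w - int v) * int l) / of_nat n))"
    proof -
      have "(\<lambda>m. \<Sum>l<n. (\<mu> * lam l)^m / of_nat (fact m) * (ee n ((int w - int v) * int l) / of_nat n)) sums (\<Sum>l<n. exp (\<mu> * lam l) * (ee n ((int w - int v) * int l) / of_nat n))"
        by (intro sums_sum sums_mult2 exp_sums_c)
      moreover have "(\<lambda>m. \<Sum>l<n. (\<mu> * lam l)^m / of_nat (fact m) * (ee n ((int w - int v) * int l) / of_nat n)) = (\<lambda>m. (B ^\<^sub>m m) $$ (w,v) / of_nat (fact m))"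
      proof (rule ext)
        fix m
        show "(\<Sum>l<n. (\<mu> * lam l)^m / of_nat (fact m) * (ee n ((int w - int v) * int l) / of_nat n)) = (B ^\<^sub>m m) $$ (w,v) / of_nat (fact m)"
          unfolding powB sum_divide_distrib by (intro sum.cong refl) simp
      qed
      ultimately show ?thesis by simp
    qed
    define X where "X = exp (\<i> * complex_of_real (- (t * \<kappa>)))"
    have ex: "exp (\<mu> * lam l) = ee n (- (int s * int l)) * X" if l: "l < n" for l
    proof -
      have "\<mu> * lam l = of_int (int n * (- (int s * c l)) + (- (int s * int l))) * (2 * of_real pi * \<i> / of_nat n) + \<i> * complex_of_real (- (t * \<kappa>))"
        using n0 unfolding lam_eq[OF l] \<mu>_def t_def by (simp add: field_simps)
      then have "exp (\<mu> * lam l) = ee n (int n * (- (int s * c l)) + (- (int s * int l))) * X"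
        unfolding X_def ee_def by (simp only: exp_add)
      also have "\<dots> = ee n (- (int s * int l)) * X"
        by (simp only: ee_add ee_n[OF n0] mult_1_left)
      finally show ?thesis .
    qed
    have "mat_exp B $$ (w,v) = (\<Sum>l<n. exp (\<mu> * lam l) * (ee n ((int w - int v) * int l) / of_nat n))"
      using me sums_unique[OF sm] by simp
    also have "\<dots> = (\<Sum>l<n. X * ee n ((int w - int v - int s) * int l)) / of_nat n"
      unfolding sum_divide_distrib
      by (intro sum.cong refl) (simp add: ex ee_add[symmetric] algebra_simps)
    also have "\<dots> = X * (\<Sum>l<n. ee n ((int w - int v - int s) * int l)) / of_nat n"
      by (simp add: sum_distrib_left)
    also have "(\<Sum>l<n. ee n ((int w - int v - int s) * int l)) = of_nat n"
      using orth[OF n0, of "int w - int v - int s"] si by simp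
    finally have "mat_exp B $$ (w,v) = X" using n0 by simp
    then have "cmod (mat_exp B $$ (w,v)) = 1" unfolding X_def by simp
    then show "\<exists>t>0. cmod (mat_exp ((- \<i> * complex_of_real t) \<cdot>\<^sub>m circ_mat n a) $$ (w, v)) = 1"
      using t0 unfolding B_def \<mu>_def by blast
  qed
  show ?thesis using nd pst by simp
qed

end
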